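(* Let $\mathcal{T}$ be an $l$-eligible microdata table and let $\dot{R}$ be the set of removed tuples at the end of Phase One (as described in the context). Then $OPT \ge l\cdot h(\dot{R})$.
   Context: A microdata table $\mathcal{T}$ is a multiset of $n$ tuples, each with values on $d$ quasi-identifier (QI) attributes and one sensitive attribute (SA). For a multiset $Q$ of tuples and SA value $v$, $h(Q,v)$ is the number of tuples of $Q$ with SA value $v$, $h(Q)=\max_v h(Q,v)$, and the pillars of $Q$ are the SA values $v$ with $h(Q,v)=h(Q)$. $Q$ is $l$-eligible if $|Q|\ge l\cdot h(Q)$. Partition $\mathcal{T}$ into $Q_1,\dots,Q_s$, the maximal classes of tuples having identical values on all QI attributes. Reformulated tuple minimization: choose sub-multisets $Q'_i\subseteq Q_i$ and let $R'=\mathcal{T}\setminus\bigcup_i Q'_i$, such that every $Q'_i$ and $R'$ are $l$-eligible, minimizing $|R'|$; $OPT$ denotes the minimum value. Phase One: start with $R=\emptyset$; for each $i$, while $Q_i$ is not $l$-eligible, move one tuple whose SA value is a pillar of $Q_i$ from $Q_i$ to $R$ (ties arbitrary). $\dot{R}$ denotes the resulting $R$. *)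

theory Defs
  imports "HOL-Library.Multiset"
begin

text \<open>A tuple is a pair (QI-vector, SA value); a microdata table is a multiset of tuples.
  The QI part is abstracted as a single value of type 'q (the vector of all d QI values).\<close>

definition hv :: "('q \<times> 's) multiset \<Rightarrow> 's \<Rightarrow> nat" where
  "hv Q v = count (image_mset snd Q) v"

definition h :: "('q \<times> 's) multiset \<Rightarrow> nat" where
  "h Q = Max (insert 0 ((\<lambda>v. hv Q v) ` set_mset (image_mset snd Q)))"

definition pillar :: "('q \<times> 's) multiset \<Rightarrow> 's \<Rightarrow> bool" where
  "pillar Q v \<longleftrightarrow> hv Q v = h Q"

definition eligible :: "nat \<Rightarrow> ('q \<times> 's) multiset \<Rightarrow> bool" where
  "eligible l Q \<longleftrightarrow> l * h Q \<le> size Q"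

definition qis :: "('q \<times> 's) multiset \<Rightarrow> 'q set" where
  "qis T = fst ` set_mset T"

definition qclass :: "('q \<times> 's) multiset \<Rightarrow> 'q \<Rightarrow> ('q \<times> 's) multiset" where
  "qclass T q = filter_mset (\<lambda>t. fst t = q) T"

text \<open>Phase One on a single class: \<open>class_run l Q Qf Rf\<close> means that starting from Q, repeatedly
  moving a tuple whose SA value is a pillar while Q is not l-eligible, one can end with the
  class Qf and the moved tuples Rf (ties are resolved arbitrarily, so this is a relation).\<close>
inductive class_run :: "nat \<Rightarrow> ('q \<times> 's) multiset \<Rightarrow> ('q \<times> 's) multiset \<Rightarrow> ('q \<times> 's) multiset \<Rightarrow> bool"
  for l where
  stop: "eligible l Q \<Longrightarrow> class_run l Q Q {#}"
| move: "\<lbrakk>\<not> eligible l Q; t \<in># Q; pillar Q (snd t); class_run l (Q - {#t#}) Qf Rf\<rbrakk>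
          \<Longrightarrow> class_run l Q Qf (Rf + {#t#})"

text \<open>\<open>phase_one l T R\<close>: R is a possible value of \<open>\<dot>R\<close> at the end of Phase One.\<close>
definition phase_one :: "nat \<Rightarrow> ('q \<times> 's) multiset \<Rightarrow> ('q \<times> 's) multiset \<Rightarrow> bool" where
  "phase_one l T R \<longleftrightarrow> (\<exists>Rs. (\<forall>q\<in>qis T. \<exists>Qf. class_run l (qclass T q) Qf (Rs q))
                              \<and> R = (\<Sum>q\<in>qis T. Rs q))"

definition feasible :: "nat \<Rightarrow> ('q \<times> 's) multiset \<Rightarrow> ('q \<Rightarrow> ('q \<times> 's) multiset) \<Rightarrow> bool" where
  "feasible l T Qs \<longleftrightarrow> (\<forall>q\<in>qis T. Qs q \<subseteq># qclass T q \<and> eligible l (Qs q))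
                       \<and> eligible l (T - (\<Sum>q\<in>qis T. Qs q))"

definition opt :: "nat \<Rightarrow> ('q \<times> 's) multiset \<Rightarrow> nat" where
  "opt l T = Inf {size (T - (\<Sum>q\<in>qis T. Qs q)) | Qs. feasible l T Qs}"

end

theory Submission
  imports Defs
begin

lemma hv_le_h: "hv Q v \<le> h Q"
proof (cases "v \<in># image_mset snd Q")
  case True
  then show ?thesis unfolding h_def by (intro Max_ge) auto
next
  case False
  then have "hv Q v = 0" unfolding hv_def by (meson count_eq_zero_iff)
  then show ?thesis by simp
qed

lemma msum_mono: "(\<And>q. q \<in> A \<Longrightarrow> B q \<subseteq># C q) \<Longrightarrow> (\<Sum>q\<in>A. B q) \<subseteq># (\<Sum>q\<in>A. C q)"
  by (induction A rule: infinite_finite_induct) (auto intro: subset_mset.add_mono)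

lemma h_mono:
  assumes "image_mset snd Q' \<subseteq># image_mset snd Q"
  shows "h Q' \<le> h Q"
proof -
  have "\<And>v. hv Q' v \<le> hv Q v" using assms by (simp add: hv_def subseteq_mset_def)
  then show ?thesis unfolding h_def[of Q']
    by (intro Max.boundedI) (auto intro: order_trans[OF _ hv_le_h])
qed

lemma run_decomp: "class_run l Q Qf Rf \<Longrightarrow> Q = Qf + Rf"
proof (induction rule: class_run.induct)
  case (stop Q) then show ?case by simp
next
  case (move Q t Qf Rf)
  have "Q = (Q - {#t#}) + {#t#}" using move(2) by simp
  then show ?case using move(5) by (simp add: add.assoc)
qed

lemma run_dom:
  "class_run l Q Qf Rf \<Longrightarrow> image_mset snd Q' \<subseteq># image_mset snd Q \<Longrightarrow> eligible l Q'
   \<Longrightarrow> image_mset snd Q' \<subseteq># image_mset snd Qf"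
proof (induction arbitrary: Q' rule: class_run.induct)
  case (stop Q)
  then show ?case by simp
next
  case (move Q t Qf Rf)
  let ?s = "snd t"
  have lt: "count (image_mset snd Q') ?s < count (image_mset snd Q) ?s"
  proof (rule ccontr)
    assume "\<not> ?thesis"
    then have "h Q \<le> hv Q' ?s" using move.hyps(3) by (simp add: pillar_def hv_def)
    also have "\<dots> \<le> h Q'" by (rule hv_le_h)
    finally have a: "h Q \<le> h Q'" .
    have "size Q' \<le> size Q" using size_mset_mono[OF move.prems(1)] by simp
    with a move.hyps(1) move.prems(2) show False unfolding eligible_def
      by (meson le_trans mult_le_mono2 not_le)
  qed
  have "image_mset snd Q' \<subseteq># image_mset snd (Q - {#t#})"
    unfolding subseteq_mset_def
  proof
    fix v
    have c: "count (image_mset snd (Q - {#t#})) v = count (image_mset snd Q) v - (if v = ?s then 1 else 0)"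
      using move.hyps(2) by (simp add: image_mset_Diff)
    show "count (image_mset snd Q') v \<le> count (image_mset snd (Q - {#t#})) v"
      using lt move.prems(1) c by (cases "v = ?s") (auto simp: subseteq_mset_def)
  qed
  then show ?case using move.IH move.prems(2) by blast
qed

lemma my_image_mset_sum: "image_mset f (\<Sum>q\<in>A. g q) = (\<Sum>q\<in>A. image_mset f (g q))"
  by (induction A rule: infinite_finite_induct) auto

lemma diff_add_mset:
  assumes "b \<subseteq># a" "d \<subseteq># c" shows "(a - b) + (c - d) = (a + c) - (b + d)"
proof (rule multiset_eqI)
  fix x
  have "count b x \<le> count a x" "count d x \<le> count c x"
    using assms by (auto simp: subseteq_mset_def)
  then show "count (a - b + (c - d)) x = count (a + c - (b + d)) x" by simp
qed

lemma sum_diff_mset: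
  assumes "finite A" "\<forall>q\<in>A. B q \<subseteq># C q"
  shows "(\<Sum>q\<in>A. C q - B q) = (\<Sum>q\<in>A. C q) - (\<Sum>q\<in>A. B q)"
  using assms
proof (induction A rule: finite_induct)
  case empty then show ?case by simp
next
  case (insert x F)
  have "(\<Sum>q\<in>F. B q) \<subseteq># (\<Sum>q\<in>F. C q)"
    using insert(4) by (intro msum_mono) auto
  with insert show ?case
    by (simp add: diff_add_mset)
qed

lemma T_decomp: "T = (\<Sum>q\<in>qis T. qclass T q)"
proof (rule multiset_eqI)
  fix x :: "'a \<times> 'b"
  obtain a b where x: "x = (a, b)" by (cases x)
  have fin: "finite (qis T)" by (simp add: qis_def)
  have "(\<Sum>q\<in>qis T. count (qclass T q) x) = (if a \<in> qis T then count T x else 0)"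
  proof -
    have "(\<Sum>q\<in>qis T. count (qclass T q) x) = (\<Sum>q\<in>qis T. if q = a then count T x else 0)"
      by (intro sum.cong) (auto simp: qclass_def x)
    then show ?thesis using fin by simp
  qed
  moreover have "a \<notin> qis T \<Longrightarrow> count T x = 0"
    by (auto simp: qis_def x count_eq_zero_iff image_iff)
  ultimately show "count T x = count (\<Sum>q\<in>qis T. qclass T q) x"
    by (simp add: count_sum) 
qed

theorem corollary2:
  fixes l :: nat and T R :: "('q \<times> 's) multiset"
  assumes "eligible l T"
    and "phase_one l T R"
  shows "l * h R \<le> opt l T"
proof -
  obtain Rs where Rs: "\<forall>q\<in>qis T. \<exists>Qf. class_run l (qclass T q) Qf (Rs q)"
    and R: "R = (\<Sum>q\<in>qis T. Rs q)" using assms(2) unfolding phase_one_def by blast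
  have fin: "finite (qis T)" by (simp add: qis_def)
  have bound: "l * h R \<le> size (T - (\<Sum>q\<in>qis T. Qs q))" if f: "feasible l T Qs" for Qs
  proof -
    have sub: "\<forall>q\<in>qis T. Qs q \<subseteq># qclass T q" and el: "\<forall>q\<in>qis T. eligible l (Qs q)"
      and elR: "eligible l (T - (\<Sum>q\<in>qis T. Qs q))" using f unfolding feasible_def by auto
    have each: "image_mset snd (Rs q) \<subseteq># image_mset snd (qclass T q - Qs q)" if q: "q \<in> qis T" for q
    proof -
      obtain Qf where run: "class_run l (qclass T q) Qf (Rs q)" using Rs q by blast
      have dec: "qclass T q = Qf + Rs q" using run_decomp[OF run] .
      have "image_mset snd (Qs q) \<subseteq># image_mset snd Qf"
        using run_dom[OF run image_mset_subseteq_mono[OF sub[rule_format, OF q]]] el q by blast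
      then have cS: "\<And>v. count (image_mset snd (Qs q)) v \<le> count (image_mset snd Qf) v"
        by (simp add: subseteq_mset_def)
      have eq: "image_mset snd (qclass T q - Qs q) = image_mset snd Qf + image_mset snd (Rs q) - image_mset snd (Qs q)"
      proof -
        have "Qs q \<subseteq># qclass T q" using sub q by blast
        then have "image_mset snd (qclass T q - Qs q) = image_mset snd (qclass T q) - image_mset snd (Qs q)"
          by (rule image_mset_Diff)
        then show ?thesis using dec by simp
      qed
      show ?thesis unfolding eq subseteq_mset_def
      proof
        fix v
        show "count (image_mset snd (Rs q)) v \<le> count (image_mset snd Qf + image_mset snd (Rs q) - image_mset snd (Qs q)) v"
          using cS[of v] by simp
      qed
    qed
    have "image_mset snd R = (\<Sum>q\<in>qis T. image_mset snd (Rs q))"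
      unfolding R by (simp add: my_image_mset_sum)
    also have "\<dots> \<subseteq># (\<Sum>q\<in>qis T. image_mset snd (qclass T q - Qs q))"
      using each by (intro msum_mono) auto
    also have "\<dots> = image_mset snd (\<Sum>q\<in>qis T. qclass T q - Qs q)"
      by (simp add: my_image_mset_sum)
    also have "(\<Sum>q\<in>qis T. qclass T q - Qs q) = T - (\<Sum>q\<in>qis T. Qs q)"
      using sum_diff_mset[OF fin sub] T_decomp[of T] by simp
    finally have "h R \<le> h (T - (\<Sum>q\<in>qis T. Qs q))" by (rule h_mono)
    then show ?thesis using elR unfolding eligible_def
      by (meson le_trans mult_le_mono2)
  qed
  have "feasible l T (\<lambda>_. {#})" using assms(1)
    by (simp add: feasible_def eligible_def h_def)
  then have ne: "{size (T - (\<Sum>q\<in>qis T. Qs q)) | Qs. feasible l T Qs} \<noteq> {}" by blast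
  show ?thesis unfolding opt_def
    by (rule cInf_greatest[OF ne]) (auto intro: bound)
qed

end
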